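(* Let $\mathcal{C}$ be a systematic $[n,k,d]$ linear code over $\mathbb{F}_q$ which is an $(r,\delta)_i$ code, with $r\mid k$, $d<r+2\delta-1$, and $$d = n-k+1-\left(\left\lceil \tfrac{k}{r}\right\rceil-1\right)(\delta-1).$$ Then the generalized Hamming weights of the dual code satisfy $d^\perp_i = r+i$ for $1\le i\le \delta-1$.
   Context: For a linear code $\mathcal{D}$, its $j$-th generalized Hamming weight is the minimum size of the support $\bigcup_{\mathbf{c}\in\mathcal{E}}\{l: c_l\ne 0\}$ over all $j$-dimensional subcodes $\mathcal{E}$ of $\mathcal{D}$; $d^\perp_j$ denotes that of the dual code $\mathcal{C}^\perp$. Coordinate $i$ has locality $(r,\delta)$ if there is $S_i\ni i$ with $|S_i|\le r+\delta-1$ such that the punctured code $\mathcal{C}|_{S_i}$ has minimum distance at least $\delta$. An $(r,\delta)_i$ code is a systematic linear code (information symbols in the first $k$ coordinates) in which all $k$ information coordinates have locality $(r,\delta)$. *)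

theory Defs
  imports Complex_Main "HOL-Library.Function_Algebras"
begin

text \<open>Words of length n over a finite field 'a are functions nat => 'a vanishing
  outside the coordinate set {0..<n}; coordinates are 0-based, so the
  information coordinates of a systematic code are {0..<k}.\<close>

definition fscale :: "'a::field \<Rightarrow> (nat \<Rightarrow> 'a) \<Rightarrow> (nat \<Rightarrow> 'a)" where
  "fscale c v = (\<lambda>i. c * v i)"

lemma vector_space_fscale: "vector_space (fscale :: 'a::field \<Rightarrow> _)"
  by unfold_locales (auto simp: fscale_def fun_eq_iff algebra_simps)

definition words :: "nat \<Rightarrow> (nat \<Rightarrow> 'a::zero) set" where
  "words n = {v. \<forall>i\<ge>n. v i = 0}"

definition lin_code :: "nat \<Rightarrow> (nat \<Rightarrow> 'a::field) set \<Rightarrow> bool" where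
  "lin_code n C \<longleftrightarrow> C \<subseteq> words n \<and> module.subspace fscale C"

definition code_dim :: "(nat \<Rightarrow> 'a::field) set \<Rightarrow> nat" where
  "code_dim C = vector_space.dim fscale C"

definition wt_supp :: "(nat \<Rightarrow> 'a::zero) \<Rightarrow> nat set" where
  "wt_supp c = {l. c l \<noteq> 0}"

definition min_dist :: "(nat \<Rightarrow> 'a::zero) set \<Rightarrow> nat" where
  "min_dist C = Min {card (wt_supp c) | c. c \<in> C \<and> c \<noteq> 0}"

definition code_supp :: "(nat \<Rightarrow> 'a::zero) set \<Rightarrow> nat set" where
  "code_supp E = (\<Union>c\<in>E. wt_supp c)"

definition ghw :: "(nat \<Rightarrow> 'a::field) set \<Rightarrow> nat \<Rightarrow> nat" where
  "ghw D j = Min {card (code_supp E) | E. E \<subseteq> D \<and> module.subspace fscale E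
                                          \<and> vector_space.dim fscale E = j}"

definition dual_code :: "nat \<Rightarrow> (nat \<Rightarrow> 'a::field) set \<Rightarrow> (nat \<Rightarrow> 'a) set" where
  "dual_code n C = {v \<in> words n. \<forall>c\<in>C. (\<Sum>i<n. v i * c i) = 0}"

definition puncture :: "(nat \<Rightarrow> 'a::zero) set \<Rightarrow> nat set \<Rightarrow> (nat \<Rightarrow> 'a) set" where
  "puncture C S = (\<lambda>c. (\<lambda>l. if l \<in> S then c l else 0)) ` C"

text \<open>Minimum distance of C|_S is at least \<delta> (vacuous if C|_S = {0},
  following the convention that the zero code has infinite minimum distance).\<close>
definition min_dist_ge :: "(nat \<Rightarrow> 'a::zero) set \<Rightarrow> nat \<Rightarrow> bool" where
  "min_dist_ge C \<delta> \<longleftrightarrow> (\<forall>c\<in>C. c \<noteq> 0 \<longrightarrow> card (wt_supp c) \<ge> \<delta>)"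

definition has_locality ::
  "nat \<Rightarrow> (nat \<Rightarrow> 'a::zero) set \<Rightarrow> nat \<Rightarrow> nat \<Rightarrow> nat \<Rightarrow> bool" where
  "has_locality n C r \<delta> i \<longleftrightarrow>
     (\<exists>S. S \<subseteq> {..<n} \<and> i \<in> S \<and> card S \<le> r + \<delta> - 1 \<and> min_dist_ge (puncture C S) \<delta>)"

definition systematic :: "nat \<Rightarrow> (nat \<Rightarrow> 'a::zero) set \<Rightarrow> bool" where
  "systematic k C \<longleftrightarrow> (\<forall>u\<in>words k. \<exists>!c. c \<in> C \<and> (\<forall>i<k. c i = u i))"

definition rdelta_i_code ::
  "nat \<Rightarrow> nat \<Rightarrow> nat \<Rightarrow> nat \<Rightarrow> (nat \<Rightarrow> 'a::field) set \<Rightarrow> bool" where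
  "rdelta_i_code n k r \<delta> C \<longleftrightarrow> lin_code n C \<and> code_dim C = k \<and> systematic k C
      \<and> (\<forall>i<k. has_locality n C r \<delta> i)"

end

theory Submission
  imports Defs
begin



interpretation vs: vector_space "fscale :: 'a::field \<Rightarrow> (nat \<Rightarrow> 'a) \<Rightarrow> (nat \<Rightarrow> 'a)"
  by (rule vector_space_fscale)

lemma fscale_app: "fscale c v i = c * v i" by (simp add: fscale_def)

lemma finite_words: "finite (words n :: (nat \<Rightarrow> 'a::{finite,zero}) set)"
proof -
  have "words n = {f :: nat \<Rightarrow> 'a. \<forall>x. (x \<in> {..<n} \<longrightarrow> f x \<in> UNIV) \<and> (x \<notin> {..<n} \<longrightarrow> f x = 0)}"
    by (auto simp: words_def)
  then show ?thesis using finite_set_of_finite_funs[of "{..<n}" "UNIV :: 'a set" 0] by simp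
qed

lemma dim_le_dim_span:
  fixes S T :: "(nat \<Rightarrow> 'a::field) set"
  assumes "S \<subseteq> vs.span T" "finite T"
  shows "vs.dim S \<le> vs.dim T"
proof -
  obtain B where B: "B \<subseteq> T" "vs.independent B" "T \<subseteq> vs.span B" "card B = vs.dim T"
    by (rule vs.basis_exists)
  have "vs.span T \<subseteq> vs.span B" using B(3) by (metis vs.span_minimal vs.subspace_span)
  then have "S \<subseteq> vs.span B" using assms(1) by blast
  moreover have "finite B" using B(1) assms(2) finite_subset by blast
  ultimately show ?thesis using vs.dim_le_card B(4) by metis
qed

lemma dim_subset_fin:
  fixes S T :: "(nat \<Rightarrow> 'a::field) set"
  assumes "S \<subseteq> T" "finite T"
  shows "vs.dim S \<le> vs.dim T"
  using dim_le_dim_span[of S T] assms vs.span_superset by blast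

lemma dim_insert_le:
  fixes S :: "(nat \<Rightarrow> 'a::field) set"
  assumes "finite S"
  shows "vs.dim (insert a S) \<le> vs.dim S + 1"
proof -
  obtain B where B: "B \<subseteq> S" "vs.independent B" "S \<subseteq> vs.span B" "card B = vs.dim S"
    by (rule vs.basis_exists)
  have fB: "finite B" using B(1) assms finite_subset by blast
  have "insert a S \<subseteq> vs.span (insert a B)"
    using B(3) vs.span_mono[of B "insert a B"] vs.span_superset[of "insert a B"] by blast
  then have "vs.dim (insert a S) \<le> card (insert a B)" using vs.dim_le_card fB by blast
  also have "\<dots> \<le> card B + 1" using fB by (simp add: card_insert_if)
  finally show ?thesis using B(4) by simp
qed

lemma dim_pos_nonzero:
  fixes S :: "(nat \<Rightarrow> 'a::field) set"
  assumes "vs.dim S \<ge> 1"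
  shows "\<exists>x\<in>S. x \<noteq> 0"
proof (rule ccontr)
  assume "\<not> ?thesis"
  then have "S \<subseteq> vs.span {}" by auto
  then have "vs.dim S \<le> card ({} :: (nat \<Rightarrow> 'a) set)" using vs.dim_le_card by blast
  then show False using assms by simp
qed

lemma sum_fun_apply: "(sum f A) i = (\<Sum>z\<in>A. (f z i :: 'b::comm_monoid_add))"
  by (induction A rule: infinite_finite_induct) auto

definition unitv :: "nat \<Rightarrow> nat \<Rightarrow> 'a::{zero,one}" where
  "unitv z = (\<lambda>i. if i = z then 1 else 0)"

lemma expand_support:
  fixes v :: "nat \<Rightarrow> 'a::field"
  assumes "finite Z" "\<forall>i. i \<notin> Z \<longrightarrow> v i = 0"
  shows "v = (\<Sum>z\<in>Z. fscale (v z) (unitv z))"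
proof
  fix i
  have "(\<Sum>z\<in>Z. fscale (v z) (unitv z)) i = (\<Sum>z\<in>Z. v z * unitv z i)"
    by (simp add: sum_fun_apply fscale_app)
  also have "\<dots> = v i"
  proof (cases "i \<in> Z")
    case True
    have "(\<Sum>z\<in>Z. v z * unitv z i) = (\<Sum>z\<in>Z. if z = i then v z else 0)"
      by (rule sum.cong) (auto simp: unitv_def)
    then show ?thesis using True assms(1) by simp
  next
    case False
    have "(\<Sum>z\<in>Z. v z * unitv z i) = 0"
      using False by (intro sum.neutral) (auto simp: unitv_def)
    then show ?thesis using False assms(2) by simp
  qed
  finally show "v i = (\<Sum>z\<in>Z. fscale (v z) (unitv z)) i" by simp
qed

lemma dim_support:
  fixes S :: "(nat \<Rightarrow> 'a::field) set"
  assumes "finite Z" "\<forall>v\<in>S. \<forall>i. i \<notin> Z \<longrightarrow> v i = 0"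
  shows "vs.dim S \<le> card Z"
proof -
  have "S \<subseteq> vs.span (unitv ` Z)"
  proof
    fix v assume "v \<in> S"
    then have "\<forall>i. i \<notin> Z \<longrightarrow> v i = 0" using assms(2) by blast
    then have "v = (\<Sum>z\<in>Z. fscale (v z) (unitv z))" by (rule expand_support[OF assms(1)])
    also have "\<dots> \<in> vs.span (unitv ` Z)"
    proof (rule vs.span_sum)
      fix z assume "z \<in> Z"
      then have "unitv z \<in> vs.span (unitv ` Z)" by (simp add: vs.span_base)
      then show "fscale (v z) (unitv z) \<in> vs.span (unitv ` Z)" by (rule vs.span_scale)
    qed
    finally show "v \<in> vs.span (unitv ` Z)" .
  qed
  then have "vs.dim S \<le> card (unitv ` Z :: (nat \<Rightarrow> 'a) set)" using assms(1) by (metis vs.dim_le_card finite_imageI)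
  also have "\<dots> \<le> card Z" using assms(1) by (rule card_image_le)
  finally show ?thesis .
qed




lemma words_lt: "v \<in> words n \<Longrightarrow> v x \<noteq> 0 \<Longrightarrow> x < n"
  by (auto simp: words_def) (meson not_le)

lemma vector_space_times: "vector_space ((*) :: 'a::field \<Rightarrow> 'a \<Rightarrow> 'a)"
  by unfold_locales (auto simp: algebra_simps)

interpretation vp: vector_space_pair "fscale :: 'a::field \<Rightarrow> (nat \<Rightarrow> 'a) \<Rightarrow> (nat \<Rightarrow> 'a)" "(*) :: 'a \<Rightarrow> 'a \<Rightarrow> 'a"
  by (intro vector_space_pair.intro vector_space_fscale vector_space_times)

lemma hyper_dim:
  fixes E :: "(nat \<Rightarrow> 'a::field) set"
  assumes "finite E" "vs.subspace E" "v \<in> E" "v l \<noteq> 0"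
  shows "vs.dim E \<le> vs.dim {w\<in>E. w l = 0} + 1"
proof -
  let ?E' = "{w\<in>E. w l = 0}"
  have "E \<subseteq> vs.span (insert v ?E')"
  proof
    fix w assume w: "w \<in> E"
    define a where "a = w l / v l"
    have "w - fscale a v \<in> E" using assms(2,3) w by (intro vs.subspace_diff vs.subspace_scale) auto
    moreover have "(w - fscale a v) l = 0" using assms(4) by (simp add: a_def fscale_app)
    ultimately have "w - fscale a v \<in> ?E'" by simp
    then have "w - fscale a v \<in> vs.span (insert v ?E')" by (intro vs.span_base) simp
    moreover have "fscale a v \<in> vs.span (insert v ?E')" by (intro vs.span_scale vs.span_base) simp
    ultimately have "(w - fscale a v) + fscale a v \<in> vs.span (insert v ?E')" by (rule vs.span_add)
    then show "w \<in> vs.span (insert v ?E')" by simp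
  qed
  moreover have "finite (insert v ?E')" using assms(1) by simp
  ultimately have "vs.dim E \<le> vs.dim (insert v ?E')" by (rule dim_le_dim_span)
  also have "\<dots> \<le> vs.dim ?E' + 1" using assms(1) by (intro dim_insert_le) simp
  finally show ?thesis .
qed

lemma subspace_vanish:
  "vs.subspace {w :: nat \<Rightarrow> 'a::field. \<forall>x. x \<notin> Z \<longrightarrow> w x = 0}"
  by (rule vs.subspaceI) (auto simp: fscale_app)

lemma code_supp_sub: "code_supp E \<subseteq> Z \<longleftrightarrow> (\<forall>w\<in>E. \<forall>x. x \<notin> Z \<longrightarrow> w x = 0)"
  by (auto simp: code_supp_def wt_supp_def)

lemma ghw_lower_gen:
  fixes D :: "(nat \<Rightarrow> 'a::field) set"
  assumes D: "D \<subseteq> words n" and wt: "\<forall>v\<in>D. v \<noteq> 0 \<longrightarrow> r + 1 \<le> card (wt_supp v)"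
  shows "1 \<le> i \<Longrightarrow> E \<subseteq> D \<Longrightarrow> vs.subspace E \<Longrightarrow> i \<le> vs.dim E \<Longrightarrow> finite E \<Longrightarrow> r + i \<le> card (code_supp E)"
proof (induction i arbitrary: E)
  case 0
  then show ?case by simp
next
  case (Suc i)
  have fin: "finite (code_supp E)"
  proof -
    have "code_supp E \<subseteq> {..<n}" using Suc.prems(2) D
      by (auto simp: code_supp_def wt_supp_def dest!: words_lt)
    then show ?thesis using finite_subset by blast
  qed
  obtain v where v: "v \<in> E" "v \<noteq> 0" using dim_pos_nonzero[of E] Suc.prems(4) by auto
  have "\<exists>l. v l \<noteq> 0" using v(2) by (rule contrapos_np) (auto simp: fun_eq_iff)
  then obtain l where l: "v l \<noteq> 0" by blast
  have lE: "l \<in> code_supp E" using v l by (auto simp: code_supp_def wt_supp_def)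
  show ?case
  proof (cases "i = 0")
    case True
    have "wt_supp v \<subseteq> code_supp E" using v by (auto simp: code_supp_def)
    then have "card (wt_supp v) \<le> card (code_supp E)" using fin by (rule card_mono[rotated])
    moreover have "r + 1 \<le> card (wt_supp v)" using wt v Suc.prems(2) by blast
    ultimately show ?thesis using True by simp
  next
    case False
    let ?E' = "{w\<in>E. w l = 0}"
    have "vs.dim E \<le> vs.dim ?E' + 1" using hyper_dim[OF Suc.prems(5,3) v(1) l] .
    then have "i \<le> vs.dim ?E'" using Suc.prems(4) by simp
    moreover have "vs.subspace ?E'"
    proof (rule vs.subspaceI)
      show "0 \<in> ?E'" using vs.subspace_0[OF Suc.prems(3)] by simp
      show "x + y \<in> ?E'" if "x \<in> ?E'" "y \<in> ?E'" for x y
        using that vs.subspace_add[OF Suc.prems(3)] by auto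
      show "fscale c x \<in> ?E'" if "x \<in> ?E'" for c x
        using that vs.subspace_scale[OF Suc.prems(3)] by (auto simp: fscale_app)
    qed
    ultimately have "r + i \<le> card (code_supp ?E')"
      using Suc.IH[of ?E'] False Suc.prems(2,5) by auto
    moreover have "code_supp ?E' \<subseteq> code_supp E - {l}" by (auto simp: code_supp_def wt_supp_def)
    ultimately have "r + i \<le> card (code_supp E - {l})"
      using fin by (meson card_mono finite_Diff order_trans)
    moreover have "card (code_supp E) > 0" using lE fin card_gt_0_iff by blast
    ultimately show ?thesis using lE fin by (simp add: card_Diff_singleton)
  qed
qed




locale code =
  fixes C :: "(nat \<Rightarrow> 'a::{finite,field}) set" and n k r \<delta> :: nat
  assumes rd: "rdelta_i_code n k r \<delta> C"
begin

lemma C_words: "C \<subseteq> words n" using rd by (simp add: rdelta_i_code_def lin_code_def)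
lemma C_sub: "vs.subspace C" using rd by (simp add: rdelta_i_code_def lin_code_def)
lemma finite_C: "finite C" using C_words finite_words finite_subset by blast
lemma dim_C: "vs.dim C = k" using rd by (simp add: rdelta_i_code_def code_dim_def)

definition K :: "nat set \<Rightarrow> (nat \<Rightarrow> 'a) set" where
  "K X = {c\<in>C. \<forall>l\<in>X. c l = 0}"

lemma K_empty: "K {} = C" by (simp add: K_def)
lemma K_finite: "finite (K X)" using finite_C by (simp add: K_def)
lemma K_mono: "X \<subseteq> Y \<Longrightarrow> K Y \<subseteq> K X" by (auto simp: K_def)

lemma K_subspace: "vs.subspace (K X)"
proof (rule vs.subspaceI)
  show "0 \<in> K X" using vs.subspace_0[OF C_sub] by (simp add: K_def)
  show "x + y \<in> K X" if "x \<in> K X" "y \<in> K X" for x y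
    using that vs.subspace_add[OF C_sub] by (auto simp: K_def)
  show "fscale c x \<in> K X" if "x \<in> K X" for c x
    using that vs.subspace_scale[OF C_sub] by (auto simp: K_def fscale_app)
qed

lemma K_insert: "vs.dim (K X) \<le> vs.dim (K (insert l X)) + 1"
proof (cases "\<exists>c0\<in>K X. c0 l \<noteq> 0")
  case True
  then obtain c0 where c0: "c0 \<in> K X" "c0 l \<noteq> 0" by blast
  have eq: "K (insert l X) = {w\<in>K X. w l = 0}" by (auto simp: K_def)
  show ?thesis unfolding eq using hyper_dim[OF K_finite K_subspace c0] .
next
  case False
  then have "K (insert l X) = K X" by (auto simp: K_def)
  then show ?thesis by simp
qed

lemma K_union: "finite U \<Longrightarrow> vs.dim (K X) \<le> vs.dim (K (X \<union> U)) + card U"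
proof (induction U rule: finite_induct)
  case empty
  then show ?case by simp
next
  case (insert x F)
  have "vs.dim (K (X \<union> F)) \<le> vs.dim (K (insert x (X \<union> F))) + 1" by (rule K_insert)
  then show ?case using insert by simp
qed

lemma sys_nonzero:
  assumes "c \<in> C" "c \<noteq> 0"
  shows "\<exists>j<k. c j \<noteq> 0"
proof (rule ccontr)
  assume "\<not> ?thesis"
  then have cz: "\<forall>i<k. c i = 0" by auto
  have "(0 :: nat \<Rightarrow> 'a) \<in> words k" by (simp add: words_def)
  moreover have "\<forall>u\<in>words k. \<exists>!c. c \<in> C \<and> (\<forall>i<k. c i = u i)"
    using rd by (simp add: rdelta_i_code_def systematic_def)
  ultimately have "\<exists>!c. c \<in> C \<and> (\<forall>i<k. c i = (0::nat\<Rightarrow>'a) i)" by blast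
  moreover have "(0::nat\<Rightarrow>'a) \<in> C" using vs.subspace_0[OF C_sub] .
  ultimately have "c = 0" using cz assms(1) by auto
  then show False using assms(2) by simp
qed

lemma local_group:
  assumes "j < k"
  obtains S where "S \<subseteq> {..<n}" "j \<in> S" "card S \<le> r + \<delta> - 1"
    "\<And>c V. c \<in> C \<Longrightarrow> finite V \<Longrightarrow> card V < \<delta> \<Longrightarrow> (\<forall>l\<in>S-V. c l = 0) \<Longrightarrow> (\<forall>l\<in>S. c l = 0)"
proof -
  obtain S where S: "S \<subseteq> {..<n}" "j \<in> S" "card S \<le> r + \<delta> - 1" "min_dist_ge (puncture C S) \<delta>"
    using rd assms by (auto simp: rdelta_i_code_def has_locality_def)
  have "\<forall>l\<in>S. c l = 0" if c: "c \<in> C" "finite V" "card V < \<delta>" "\<forall>l\<in>S-V. c l = 0" for c V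
  proof -
    define p where "p = (\<lambda>l. if l \<in> S then c l else 0)"
    have pP: "p \<in> puncture C S" using c(1) by (auto simp: puncture_def p_def)
    have "wt_supp p \<subseteq> V" using c(4) by (auto simp: wt_supp_def p_def)
    then have "card (wt_supp p) \<le> card V" using c(2) by (rule card_mono[rotated])
    then have "p = 0" using S(4) pP c(3) by (force simp: min_dist_ge_def)
    then show ?thesis by (metis p_def zero_fun_def)
  qed
  then show ?thesis using that S(1-3) by blast
qed

end



context code begin

lemma step:
  assumes X: "X \<subseteq> {..<n}" and ne: "c \<in> K X" "c \<noteq> 0" and d1: "1 \<le> \<delta>"
  shows "\<exists>X'. X \<subseteq> X' \<and> X' \<subseteq> {..<n} \<and> vs.dim (K X) \<le> vs.dim (K X') + r
     \<and> card X + vs.dim (K X) + (\<delta> - 1) \<le> card X' + vs.dim (K X')"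
proof -
  have cC: "c \<in> C" and cX: "\<forall>l\<in>X. c l = 0" using ne(1) by (auto simp: K_def)
  obtain j where j: "j < k" "c j \<noteq> 0" using sys_nonzero[OF cC ne(2)] by blast
  obtain S where S: "S \<subseteq> {..<n}" "j \<in> S" "card S \<le> r + \<delta> - 1"
    and loc: "\<And>c V. c \<in> C \<Longrightarrow> finite V \<Longrightarrow> card V < \<delta> \<Longrightarrow> (\<forall>l\<in>S-V. c l = 0) \<Longrightarrow> (\<forall>l\<in>S. c l = 0)"
    using local_group[OF j(1)] by blast
  have finS: "finite S" using S(1) finite_subset by blast
  have finX: "finite X" using X finite_subset by blast
  define W where "W = S - X"
  have finW: "finite W" using finS by (simp add: W_def)
  have Wge: "\<delta> \<le> card W"
  proof (rule ccontr)
    assume "\<not> \<delta> \<le> card W"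
    then have "card W < \<delta>" by simp
    moreover have "\<forall>l\<in>S-W. c l = 0" using cX by (auto simp: W_def)
    ultimately have "\<forall>l\<in>S. c l = 0" using loc[OF cC finW] by blast
    then show False using S(2) j(2) by blast
  qed
  obtain V where V: "V \<subseteq> W" "card V = \<delta> - 1" "finite V"
  proof -
    have "\<delta> - 1 \<le> card W" using Wge by simp
    then show ?thesis using obtain_subset_with_card_n that by blast
  qed
  define X' where "X' = X \<union> S"
  have KX': "K X' = K (X \<union> (W - V))"
  proof
    show "K X' \<subseteq> K (X \<union> (W - V))" by (rule K_mono) (auto simp: X'_def W_def)
    show "K (X \<union> (W - V)) \<subseteq> K X'"
    proof
      fix c' assume c': "c' \<in> K (X \<union> (W - V))"
      then have c'C: "c' \<in> C" by (simp add: K_def)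
      have "\<forall>l\<in>S-V. c' l = 0" using c' by (auto simp: K_def W_def)
      then have "\<forall>l\<in>S. c' l = 0" using loc[OF c'C V(3)] V(2) d1 by simp
      then show "c' \<in> K X'" using c' by (auto simp: K_def X'_def)
    qed
  qed
  have "vs.dim (K X) \<le> vs.dim (K (X \<union> (W - V))) + card (W - V)"
    using finW by (intro K_union) simp
  moreover have "card (W - V) = card W - (\<delta> - 1)" using V finW by (simp add: card_Diff_subset)
  ultimately have dle: "vs.dim (K X) + (\<delta> - 1) \<le> vs.dim (K X') + card W" using KX' Wge by simp
  have cX': "card X' = card X + card W"
  proof -
    have "X' = X \<union> W" by (auto simp: X'_def W_def)
    moreover have "X \<inter> W = {}" by (auto simp: W_def)
    ultimately show ?thesis using finX finW by (simp add: card_Un_disjoint)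
  qed
  have "card W \<le> card S" using finS by (auto simp: W_def intro: card_mono)
  then have "card W \<le> r + \<delta> - 1" using S(3) by simp
  then have "vs.dim (K X) \<le> vs.dim (K X') + r" using dle d1 by simp
  moreover have "card X + vs.dim (K X) + (\<delta> - 1) \<le> card X' + vs.dim (K X')" using dle cX' by simp
  moreover have "X \<subseteq> X'" "X' \<subseteq> {..<n}" using X S(1) by (auto simp: X'_def)
  ultimately show ?thesis by blast
qed

lemma iter:
  assumes X0: "X0 \<subseteq> {..<n}" and d1: "1 \<le> \<delta>"
  shows "t * r < vs.dim (K X0) \<Longrightarrow> \<exists>X. X0 \<subseteq> X \<and> X \<subseteq> {..<n} \<and> vs.dim (K X0) \<le> vs.dim (K X) + t * r
           \<and> card X0 + vs.dim (K X0) + t * (\<delta> - 1) \<le> card X + vs.dim (K X)"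
proof (induction t)
  case 0
  then show ?case using X0 by auto
next
  case (Suc t)
  have "t * r \<le> Suc t * r" by simp
  then have "t * r < vs.dim (K X0)" using Suc.prems by linarith
  then obtain X where X: "X0 \<subseteq> X" "X \<subseteq> {..<n}" "vs.dim (K X0) \<le> vs.dim (K X) + t * r"
    "card X0 + vs.dim (K X0) + t * (\<delta> - 1) \<le> card X + vs.dim (K X)" using Suc.IH by blast
  have "1 \<le> vs.dim (K X)" using X(3) Suc.prems by simp
  then obtain c where c: "c \<in> K X" "c \<noteq> 0" using dim_pos_nonzero by blast
  obtain X' where X': "X \<subseteq> X'" "X' \<subseteq> {..<n}" "vs.dim (K X) \<le> vs.dim (K X') + r"
     "card X + vs.dim (K X) + (\<delta> - 1) \<le> card X' + vs.dim (K X')"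
    using step[OF X(2) c d1] by blast
  show ?case
    by (rule exI[of _ X']) (use X X' in auto)
qed

end



context code begin

lemma dual_K:
  assumes v: "v \<in> dual_code n C" and l: "v l \<noteq> 0"
  shows "K (wt_supp v) = K (wt_supp v - {l})"
proof
  show "K (wt_supp v) \<subseteq> K (wt_supp v - {l})" by (rule K_mono) auto
  show "K (wt_supp v - {l}) \<subseteq> K (wt_supp v)"
  proof
    fix c assume c: "c \<in> K (wt_supp v - {l})"
    then have cC: "c \<in> C" by (simp add: K_def)
    have vw: "v \<in> words n" and orth: "(\<Sum>i<n. v i * c i) = 0" using v cC by (auto simp: dual_code_def)
    have ln: "l < n" using words_lt[OF vw l] .
    have "(\<Sum>i<n. v i * c i) = v l * c l + (\<Sum>i\<in>{..<n} - {l}. v i * c i)"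
      using ln by (simp add: sum.remove)
    also have "(\<Sum>i\<in>{..<n} - {l}. v i * c i) = 0"
    proof (rule sum.neutral, rule ballI)
      fix i assume "i \<in> {..<n} - {l}"
      then show "v i * c i = 0" using c by (cases "v i = 0") (auto simp: K_def wt_supp_def)
    qed
    finally have "c l = 0" using orth l by simp
    then show "c \<in> K (wt_supp v)" using c by (auto simp: K_def)
  qed
qed

lemma dual_weight:
  assumes d1: "1 \<le> \<delta>" and r1: "1 \<le> r" and kq: "k = q * r" and q1: "1 \<le> q"
    and md: "min_dist C = d" and deq: "d + k + (q - 1) * (\<delta> - 1) = n + 1"
    and v: "v \<in> dual_code n C" "v \<noteq> 0"
  shows "r + 1 \<le> card (wt_supp v)"
proof (rule ccontr)
  assume "\<not> ?thesis"
  then have Tr: "card (wt_supp v) \<le> r" by simp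
  define T where "T = wt_supp v"
  have vw: "v \<in> words n" using v by (simp add: dual_code_def)
  have Tn: "T \<subseteq> {..<n}" using words_lt[OF vw] by (auto simp: T_def wt_supp_def)
  have finT: "finite T" using Tn finite_subset by blast
  have "\<exists>l. v l \<noteq> 0" using v(2) by (rule contrapos_np) (auto simp: fun_eq_iff)
  then obtain l where l: "v l \<noteq> 0" by blast
  have lT: "l \<in> T" using l by (simp add: T_def wt_supp_def)
  have "vs.dim (K {}) \<le> vs.dim (K ({} \<union> (T - {l}))) + card (T - {l})"
    using finT by (intro K_union) simp
  then have "k \<le> vs.dim (K T) + (card T - 1)"
    using dual_K[OF v(1) l] dim_C lT finT by (simp add: K_empty T_def)
  moreover have "card T \<ge> 1" using lT finT by (metis One_nat_def Suc_leI card_gt_0_iff empty_iff)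
  ultimately have m0: "k + 1 \<le> vs.dim (K T) + card T" by simp
  have "(q - 1) * r < vs.dim (K T)"
  proof -
    have "(q - 1) * r = k - r" using kq by (simp add: diff_mult_distrib)
    moreover have "r \<le> k" using kq q1 by simp
    ultimately show ?thesis using m0 Tr unfolding T_def by linarith
  qed
  then obtain X where X: "T \<subseteq> X" "X \<subseteq> {..<n}" "vs.dim (K T) \<le> vs.dim (K X) + (q - 1) * r"
     "card T + vs.dim (K T) + (q - 1) * (\<delta> - 1) \<le> card X + vs.dim (K X)"
    using iter[OF Tn d1] by blast
  have finX: "finite X" using X(2) finite_subset by blast
  have dX1: "1 \<le> vs.dim (K X)"
  proof -
    have "(q - 1) * r = k - r" using kq by (simp add: diff_mult_distrib)
    moreover have "r \<le> k" using kq q1 by simp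
    ultimately show ?thesis using m0 Tr X(3) unfolding T_def by linarith
  qed
  have gX: "k + 1 + (q - 1) * (\<delta> - 1) \<le> card X + vs.dim (K X)" using m0 X(4) by simp
  have dXle: "vs.dim (K X) \<le> card ({..<n} - X)"
  proof (rule dim_support)
    show "finite ({..<n} - X)" by simp
    show "\<forall>c\<in>K X. \<forall>i. i \<notin> {..<n} - X \<longrightarrow> c i = 0"
    proof (intro ballI allI impI)
      fix c i assume c: "c \<in> K X" and i: "i \<notin> {..<n} - X"
      then have "c \<in> words n" using C_words by (auto simp: K_def)
      then show "c i = 0" using c i words_lt[of c n i] by (auto simp: K_def)
    qed
  qed
  obtain Z where Z: "Z \<subseteq> {..<n} - X" "card Z = vs.dim (K X) - 1" "finite Z"
  proof -
    have "vs.dim (K X) - 1 \<le> card ({..<n} - X)" using dXle by simp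
    then show ?thesis using obtain_subset_with_card_n that by blast
  qed
  have "vs.dim (K X) \<le> vs.dim (K (X \<union> Z)) + card Z" using Z(3) by (rule K_union)
  then have "1 \<le> vs.dim (K (X \<union> Z))" using Z(2) dX1 by simp
  then obtain c where c: "c \<in> K (X \<union> Z)" "c \<noteq> 0" using dim_pos_nonzero by blast
  have cC: "c \<in> C" using c by (simp add: K_def)
  have cw: "c \<in> words n" using cC C_words by blast
  have "d \<le> card (wt_supp c)"
  proof -
    have "finite {card (wt_supp c) | c. c \<in> C \<and> c \<noteq> 0}" using finite_C by simp
    moreover have "card (wt_supp c) \<in> {card (wt_supp c) | c. c \<in> C \<and> c \<noteq> 0}" using cC c(2) by blast
    ultimately have "Min {card (wt_supp c) | c. c \<in> C \<and> c \<noteq> 0} \<le> card (wt_supp c)" by (rule Min_le)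
    then show ?thesis using md unfolding min_dist_def by simp
  qed
  moreover have "wt_supp c \<subseteq> {..<n} - (X \<union> Z)"
    using c words_lt[OF cw] by (auto simp: K_def wt_supp_def)
  then have "card (wt_supp c) \<le> card ({..<n} - (X \<union> Z))" by (intro card_mono) auto
  moreover have "card ({..<n} - (X \<union> Z)) = n - card (X \<union> Z)"
    using X(2) Z(1) finX Z(3) by (subst card_Diff_subset) auto
  moreover have "card (X \<union> Z) = card X + card Z"
    using Z(1) finX Z(3) by (subst card_Un_disjoint) auto
  moreover have "card (X \<union> Z) \<le> n"
    using X(2) Z(1) card_mono[of "{..<n}" "X \<union> Z"] by auto
  ultimately have "d + card X + card Z \<le> n" by linarith
  then show False using deq gX Z(2) dX1 by linarith
qed

end



lemma linear_sum_gen: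
  fixes g :: "(nat \<Rightarrow> 'a::field) \<Rightarrow> 'a"
  assumes add: "\<And>x y. g (x + y) = g x + g y" and sc: "\<And>c x. g (fscale c x) = c * g x"
  shows "g (\<Sum>b\<in>B. fscale (u b) (h b)) = (\<Sum>b\<in>B. u b * g (h b))"
proof (induction B rule: infinite_finite_induct)
  case (infinite A)
  have "fscale 0 (0::nat\<Rightarrow>'a) = 0" by (simp add: fscale_def fun_eq_iff)
  then have "g 0 = 0" using sc[of 0 0] by simp
  then show ?case using infinite by (metis sum.infinite)
next
  case empty
  have "fscale 0 (0::nat\<Rightarrow>'a) = 0" by (simp add: fscale_def fun_eq_iff)
  then have "g 0 = 0" using sc[of 0 0] by simp
  then show ?case by (metis sum.empty)
next
  case (insert x F)
  then show ?case by (simp only: sum.insert[OF insert(1,2)] add sc insert(3))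
qed

context code begin

lemma dual_subspace: "vs.subspace (dual_code n C)"
proof (rule vs.subspaceI)
  show "0 \<in> dual_code n C" by (simp add: dual_code_def words_def)
  show "x + y \<in> dual_code n C" if "x \<in> dual_code n C" "y \<in> dual_code n C" for x y
  proof -
    have xw: "x \<in> words n" and xo: "\<forall>c\<in>C. (\<Sum>i<n. x i * c i) = 0" using that by (auto simp: dual_code_def)
    have yw: "y \<in> words n" and yo: "\<forall>c\<in>C. (\<Sum>i<n. y i * c i) = 0" using that by (auto simp: dual_code_def)
    have "x + y \<in> words n" using xw yw by (simp add: words_def)
    moreover have "(\<Sum>i<n. (x + y) i * c i) = 0" if "c \<in> C" for c
    proof -
      have "(\<Sum>i<n. (x + y) i * c i) = (\<Sum>i<n. x i * c i) + (\<Sum>i<n. y i * c i)"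
        by (simp add: distrib_right sum.distrib)
      then show ?thesis using xo yo that by simp
    qed
    ultimately show ?thesis by (simp add: dual_code_def)
  qed
  show "fscale a x \<in> dual_code n C" if "x \<in> dual_code n C" for a x
  proof -
    have fa: "fscale a x = (\<lambda>i. a * x i)" by (simp add: fscale_def)
    have xw: "x \<in> words n" and xo: "\<forall>c\<in>C. (\<Sum>i<n. x i * c i) = 0"
      using that unfolding dual_code_def by blast+
    have "(\<lambda>i. a * x i) \<in> words n" using xw unfolding words_def by auto
    moreover have "(\<Sum>i<n. a * x i * c i) = 0" if "c \<in> C" for c
    proof -
      have "(\<Sum>i<n. a * x i * c i) = a * (\<Sum>i<n. x i * c i)"
        by (simp only: sum_distrib_left mult.assoc)
      also have "\<dots> = 0" using xo that by simp
      finally show ?thesis .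
    qed
    ultimately show ?thesis unfolding fa dual_code_def by blast
  qed
qed

lemma dual_vec:
  assumes S: "S \<subseteq> {..<n}"
    and loc: "\<And>c V. c \<in> C \<Longrightarrow> finite V \<Longrightarrow> card V < \<delta> \<Longrightarrow> (\<forall>l\<in>S-V. c l = 0) \<Longrightarrow> (\<forall>l\<in>S. c l = 0)"
    and V: "V \<subseteq> S" "card V < \<delta>" and l: "l \<in> V"
  shows "\<exists>w\<in>dual_code n C. w l = 1 \<and> (\<forall>x. x \<notin> (S - V) \<union> {l} \<longrightarrow> w x = 0)"
proof -
  define A where "A = S - V"
  have finS: "finite S" using S finite_subset by blast
  have finV: "finite V" using V(1) finS finite_subset by blast
  have finA: "finite A" using finS by (simp add: A_def)
  define \<rho> :: "(nat \<Rightarrow> 'a) \<Rightarrow> (nat \<Rightarrow> 'a)" where "\<rho> x = (\<lambda>i. if i \<in> A then x i else 0)" for x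
  have well: "c l = c' l" if "c \<in> C" "c' \<in> C" "\<rho> c = \<rho> c'" for c c'
  proof -
    have dC: "c - c' \<in> C" using that vs.subspace_diff[OF C_sub] by blast
    have "\<forall>i\<in>S - V. (c - c') i = 0"
    proof
      fix i assume "i \<in> S - V"
      then have "\<rho> c i = c i" "\<rho> c' i = c' i" by (auto simp: \<rho>_def A_def)
      then show "(c - c') i = 0" using that(3) by simp
    qed
    then have "\<forall>i\<in>S. (c - c') i = 0" using loc[OF dC finV V(2)] by blast
    then show ?thesis using l V(1) by auto
  qed
  define M where "M = \<rho> ` C"
  have finM: "finite M" using finite_C by (simp add: M_def)
  obtain B where B: "B \<subseteq> M" "vs.independent B" "M \<subseteq> vs.span B" "card B = vs.dim M"
    by (rule vs.basis_exists)
  have finB: "finite B" using B(1) finM finite_subset by blast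
  have "\<forall>b\<in>B. \<exists>c. c \<in> C \<and> \<rho> c = b" using B(1) by (auto simp: M_def)
  from bchoice[OF this] obtain cb where cb0: "\<forall>b\<in>B. cb b \<in> C \<and> \<rho> (cb b) = b" by blast
  then have cb: "\<And>b. b \<in> B \<Longrightarrow> cb b \<in> C \<and> \<rho> (cb b) = b" by blast
  define g where "g = vp.construct B (\<lambda>b. cb b l)"
  have lin: "Vector_Spaces.linear fscale ((*) :: 'a \<Rightarrow> 'a \<Rightarrow> 'a) g" unfolding g_def by (rule vp.linear_construct[OF B(2)])
  have gb: "g b = cb b l" if "b \<in> B" for b unfolding g_def by (rule vp.construct_basis[OF B(2) that])
  have gadd: "\<And>x y. g (x + y) = g x + g y" and gsc: "\<And>c x. g (fscale c x) = c * g x"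
    using lin unfolding Vector_Spaces.linear_iff by auto
  have key: "g (\<rho> c) = c l" if cC: "c \<in> C" for c
  proof -
    have "\<rho> c \<in> vs.span B" using B(3) cC by (auto simp: M_def)
    then obtain u where u: "\<rho> c = (\<Sum>b\<in>B. fscale (u b) b)" using vs.span_finite[OF finB] by auto
    define c' where "c' = (\<Sum>b\<in>B. fscale (u b) (cb b))"
    have c'C: "c' \<in> C" unfolding c'_def
    proof (rule vs.subspace_sum[OF C_sub])
      fix b assume "b \<in> B"
      then have "cb b \<in> C" using cb by blast
      then show "fscale (u b) (cb b) \<in> C" by (rule vs.subspace_scale[OF C_sub])
    qed
    have "\<rho> c' = \<rho> c"
    proof
      fix i
      show "\<rho> c' i = \<rho> c i"
      proof (cases "i \<in> A")
        case True
        have "\<rho> c i = (\<Sum>b\<in>B. u b * b i)" using u by (simp add: sum_fun_apply fscale_app)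
        also have "\<dots> = (\<Sum>b\<in>B. u b * \<rho> (cb b) i)" using cb by (intro sum.cong) auto
        also have "\<dots> = (\<Sum>b\<in>B. u b * cb b i)" using True by (simp add: \<rho>_def)
        also have "\<dots> = \<rho> c' i" using True by (simp add: \<rho>_def c'_def sum_fun_apply fscale_app)
        finally show ?thesis by simp
      next
        case False
        then show ?thesis by (simp add: \<rho>_def)
      qed
    qed
    then have "c l = c' l" using well[OF cC c'C] by simp
    also have "\<dots> = (\<Sum>b\<in>B. u b * cb b l)" by (simp add: c'_def sum_fun_apply fscale_app)
    also have "\<dots> = (\<Sum>b\<in>B. u b * g b)" using gb by (intro sum.cong) auto
    also have "\<dots> = g (\<Sum>b\<in>B. fscale (u b) b)" using linear_sum_gen[OF gadd gsc, of u "\<lambda>b. b" B] by simp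
    finally show ?thesis using u by simp
  qed
  define w where "w = (\<lambda>i. if i \<in> A then - g (unitv i) else if i = l then 1 else (0::'a))"
  have lA: "l \<notin> A" using l by (simp add: A_def)
  have lS: "l \<in> S" using l V(1) by blast
  have AS: "A \<subseteq> S" by (auto simp: A_def)
  have ww: "w \<in> words n" using S AS lS by (auto simp: w_def words_def)
  have orth: "(\<Sum>i<n. w i * c i) = 0" if cC: "c \<in> C" for c
  proof -
    have sub: "insert l A \<subseteq> {..<n}" using S AS lS by blast
    have "(\<Sum>i<n. w i * c i) = (\<Sum>i\<in>insert l A. w i * c i)"
      using sub by (intro sum.mono_neutral_right) (auto simp: w_def)
    also have "\<dots> = w l * c l + (\<Sum>i\<in>A. w i * c i)" using lA finA by simp
    also have "(\<Sum>i\<in>A. w i * c i) = - (\<Sum>i\<in>A. c i * g (unitv i))"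
      by (simp add: w_def sum_negf[symmetric] mult.commute)
    also have "(\<Sum>i\<in>A. c i * g (unitv i)) = g (\<rho> c)"
    proof -
      have "\<rho> c = (\<Sum>i\<in>A. fscale (\<rho> c i) (unitv i))"
        by (rule expand_support[OF finA]) (simp add: \<rho>_def)
      also have "\<dots> = (\<Sum>i\<in>A. fscale (c i) (unitv i))" by (intro sum.cong) (auto simp: \<rho>_def)
      finally have "g (\<rho> c) = (\<Sum>i\<in>A. c i * g (unitv i))"
        using linear_sum_gen[OF gadd gsc, of c unitv A] by simp
      then show ?thesis by simp
    qed
    finally show ?thesis using key[OF cC] lA by (simp add: w_def)
  qed
  have "w \<in> dual_code n C" using ww orth by (simp add: dual_code_def)
  moreover have "w l = 1" using lA by (simp add: w_def)
  moreover have "\<forall>x. x \<notin> (S - V) \<union> {l} \<longrightarrow> w x = 0" by (auto simp: w_def A_def)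
  ultimately show ?thesis by blast
qed

end



context code begin

lemma ghw_upper:
  assumes k1: "1 \<le> k" and i: "1 \<le> i" "i \<le> \<delta> - 1"
  shows "\<exists>E. E \<subseteq> dual_code n C \<and> vs.subspace E \<and> vs.dim E = i \<and> card (code_supp E) \<le> r + i"
proof -
  obtain S where S: "S \<subseteq> {..<n}" "0 \<in> S" "card S \<le> r + \<delta> - 1"
    and loc: "\<And>c V. c \<in> C \<Longrightarrow> finite V \<Longrightarrow> card V < \<delta> \<Longrightarrow> (\<forall>l\<in>S-V. c l = 0) \<Longrightarrow> (\<forall>l\<in>S. c l = 0)"
    using local_group[of 0] k1 by auto
  have finS: "finite S" using S(1) finite_subset by blast
  have Sge: "\<delta> \<le> card S"
  proof (rule ccontr)
    assume "\<not> \<delta> \<le> card S"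
    then have lt: "card S < \<delta>" by simp
    have "(unitv 0 :: nat \<Rightarrow> 'a) \<in> words k" using k1 by (auto simp: words_def unitv_def)
    moreover have "\<forall>u\<in>words k. \<exists>!c. c \<in> C \<and> (\<forall>i<k. c i = u i)"
      using rd by (simp add: rdelta_i_code_def systematic_def)
    ultimately obtain c0 where c0: "c0 \<in> C" "\<forall>i<k. c0 i = (unitv 0 :: nat \<Rightarrow> 'a) i" by blast
    have "c0 0 = 1" using c0(2) k1 by (auto simp: unitv_def)
    moreover have "\<forall>l\<in>S. c0 l = 0" using loc[OF c0(1) finS lt] by simp
    ultimately show False using S(2) by simp
  qed
  obtain V where V: "V \<subseteq> S" "card V = \<delta> - 1" "finite V"
  proof -
    have "\<delta> - 1 \<le> card S" using Sge by simp
    then show ?thesis using obtain_subset_with_card_n that by blast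
  qed
  obtain V' where V': "V' \<subseteq> V" "card V' = i" "finite V'"
  proof -
    have "i \<le> card V" using V(2) i by simp
    then show ?thesis using obtain_subset_with_card_n that by blast
  qed
  have Vlt: "card V < \<delta>" using V(2) i by simp
  have dv: "\<exists>w\<in>dual_code n C. w l = 1 \<and> (\<forall>x. x \<notin> (S - V) \<union> {l} \<longrightarrow> w x = 0)" if "l \<in> V" for l
  proof (rule dual_vec[OF S(1) _ V(1) Vlt that])
    fix c W assume "c \<in> C" "finite W" "card W < \<delta>" "\<forall>l\<in>S-W. c l = 0"
    then show "\<forall>l\<in>S. c l = 0" by (rule loc)
  qed
  have "\<forall>l\<in>V. \<exists>w. w \<in> dual_code n C \<and> w l = 1 \<and> (\<forall>x. x \<notin> (S - V) \<union> {l} \<longrightarrow> w x = 0)"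
    using dv by blast
  from bchoice[OF this] obtain f where f0: "\<forall>l\<in>V. f l \<in> dual_code n C \<and> f l l = 1 \<and> (\<forall>x. x \<notin> (S - V) \<union> {l} \<longrightarrow> f l x = 0)"
    by blast
  then have fD: "\<And>l. l \<in> V \<Longrightarrow> f l \<in> dual_code n C"
    and f1: "\<And>l. l \<in> V \<Longrightarrow> f l l = 1"
    and fz: "\<And>l x. l \<in> V \<Longrightarrow> x \<notin> (S - V) \<union> {l} \<Longrightarrow> f l x = 0" by blast+
  have fo: "f l' l = 0" if "l \<in> V" "l' \<in> V" "l' \<noteq> l" for l l'
    using fz[of l' l] that by blast
  define E where "E = vs.span (f ` V')"
  have ED: "E \<subseteq> dual_code n C" unfolding E_def
    by (rule vs.span_minimal) (use fD V'(1) dual_subspace in auto)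
  have Esub: "vs.subspace E" unfolding E_def by simp
  have inj: "inj_on f V'"
  proof (rule inj_onI)
    fix a b assume ab: "a \<in> V'" "b \<in> V'" "f a = f b"
    show "a = b"
    proof (rule ccontr)
      assume "a \<noteq> b"
      then have "f b a = 0" using fo[of a b] ab V'(1) by auto
      moreover have "f a a = 1" using f1 ab(1) V'(1) by blast
      ultimately show False using ab(3) by simp
    qed
  qed
  have indep: "vs.independent (f ` V')"
  proof
    assume "vs.dependent (f ` V')"
    then obtain a where a: "a \<in> f ` V'" "a \<in> vs.span (f ` V' - {a})" unfolding vs.dependent_def by blast
    then obtain l where l: "l \<in> V'" "a = f l" by blast
    have "vs.span (f ` V' - {a}) \<subseteq> {w. \<forall>x. x \<notin> - {l} \<longrightarrow> w x = 0}"
    proof (rule vs.span_minimal)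
      show "f ` V' - {a} \<subseteq> {w. \<forall>x. x \<notin> - {l} \<longrightarrow> w x = 0}"
      proof
        fix w assume "w \<in> f ` V' - {a}"
        then obtain l' where "l' \<in> V'" "w = f l'" "f l' \<noteq> f l" using l by blast
        then have "w l = 0" using fo[of l l'] l V'(1) by auto
        then show "w \<in> {w. \<forall>x. x \<notin> - {l} \<longrightarrow> w x = 0}" by simp
      qed
      show "vs.subspace {w :: nat \<Rightarrow> 'a. \<forall>x. x \<notin> - {l} \<longrightarrow> w x = 0}" by (rule subspace_vanish)
    qed
    then have "a l = 0" using a(2) by blast
    moreover have "a l = 1" using f1 l V'(1) by auto
    ultimately show False by simp
  qed
  have dimE: "vs.dim E = i" unfolding E_def
    using vs.dim_span_eq_card_independent[OF indep] card_image[OF inj] V'(2) by simp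
  have "E \<subseteq> {w. \<forall>x. x \<notin> (S - V) \<union> V' \<longrightarrow> w x = 0}" unfolding E_def
  proof (rule vs.span_minimal)
    show "f ` V' \<subseteq> {w. \<forall>x. x \<notin> (S - V) \<union> V' \<longrightarrow> w x = 0}"
    proof
      fix w assume "w \<in> f ` V'"
      then obtain l where l: "l \<in> V'" "w = f l" by blast
      have "f l x = 0" if "x \<notin> (S - V) \<union> V'" for x
        using fz[of l x] l V'(1) that by blast
      then show "w \<in> {w. \<forall>x. x \<notin> (S - V) \<union> V' \<longrightarrow> w x = 0}" using l by blast
    qed
    show "vs.subspace {w :: nat \<Rightarrow> 'a. \<forall>x. x \<notin> (S - V) \<union> V' \<longrightarrow> w x = 0}" by (rule subspace_vanish)
  qed
  then have "code_supp E \<subseteq> (S - V) \<union> V'" unfolding code_supp_sub by blast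
  then have "card (code_supp E) \<le> card ((S - V) \<union> V')" using finS V'(3) by (intro card_mono) auto
  also have "\<dots> \<le> card (S - V) + card V'" by (rule card_Un_le)
  also have "card (S - V) = card S - (\<delta> - 1)" using V finS by (simp add: card_Diff_subset)
  finally have "card (code_supp E) \<le> r + i" using S(3) V'(2) Sge by linarith
  then show ?thesis using ED Esub dimE by blast
qed

end



theorem corollary2:
  fixes C :: "(nat \<Rightarrow> 'a::{finite,field}) set"
    and n k d r \<delta> :: nat
  assumes "rdelta_i_code n k r \<delta> C"
    and "1 \<le> k" and "k \<le> n" and "1 \<le> r"
    and "min_dist C = d"
    and "r dvd k"
    and "d < r + 2 * \<delta> - 1"
    and "int d = int n - int k + 1 - (\<lceil>real k / real r\<rceil> - 1) * (int \<delta> - 1)"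
  shows "\<forall>i. 1 \<le> i \<and> i \<le> \<delta> - 1 \<longrightarrow> ghw (dual_code n C) i = r + i"
proof (intro allI impI)
  fix i assume i: "1 \<le> i \<and> i \<le> \<delta> - 1"
  interpret code C n k r \<delta> by (rule code.intro) (rule assms(1))
  have d1: "1 \<le> \<delta>" using i by linarith
  obtain q where kq: "k = q * r" using assms(6) by (auto simp: dvd_def mult.commute)
  have q1: "1 \<le> q" using kq assms(2) by (cases q) auto
  have "real k / real r = real q" using kq assms(4) by simp
  then have ce: "\<lceil>real k / real r\<rceil> = int q" by simp
  have "int ((q - 1) * (\<delta> - 1)) = (int q - 1) * (int \<delta> - 1)" using q1 d1 by (simp add: of_nat_diff)
  moreover have "int d = int n - int k + 1 - (int q - 1) * (int \<delta> - 1)"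
    using assms(8) unfolding ce .
  ultimately have "int (d + k + (q - 1) * (\<delta> - 1)) = int (n + 1)" by simp
  then have deq: "d + k + (q - 1) * (\<delta> - 1) = n + 1" by (rule of_nat_eq_iff[THEN iffD1])
  have wt: "\<forall>v\<in>dual_code n C. v \<noteq> 0 \<longrightarrow> r + 1 \<le> card (wt_supp v)"
    using dual_weight[OF d1 assms(4) kq q1 assms(5) deq] by blast
  have Dw: "dual_code n C \<subseteq> words n" by (auto simp: dual_code_def)
  have low: "r + i \<le> card (code_supp E)" if "E \<subseteq> dual_code n C" "vs.subspace E" "vs.dim E = i" for E
  proof -
    have "E \<subseteq> words n" using that(1) Dw by blast
    then have "finite E" by (rule finite_subset[OF _ finite_words])
    then show ?thesis using ghw_lower_gen[OF Dw wt, of i E] i that by simp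
  qed
  obtain E where E: "E \<subseteq> dual_code n C" "vs.subspace E" "vs.dim E = i" "card (code_supp E) \<le> r + i"
    using ghw_upper[OF assms(2)] i by blast
  have cardE: "card (code_supp E) = r + i" using low[OF E(1-3)] E(4) by simp
  let ?A = "{card (code_supp E) | E. E \<subseteq> dual_code n C \<and> vs.subspace E \<and> vs.dim E = i}"
  have fin: "finite ?A"
  proof (rule finite_subset[of _ "{..n}"])
    show "?A \<subseteq> {..n}"
    proof
      fix x assume "x \<in> ?A"
      then obtain E' where E': "x = card (code_supp E')" "E' \<subseteq> dual_code n C" by blast
      have "code_supp E' \<subseteq> {..<n}" using E'(2) Dw
        by (auto simp: code_supp_def wt_supp_def dest!: words_lt)
      then have "card (code_supp E') \<le> n" using card_mono[of "{..<n}"] by fastforce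
      then show "x \<in> {..n}" using E'(1) by simp
    qed
  qed simp
  have "Min ?A = r + i"
  proof (rule Min_eqI[OF fin])
    show "r + i \<le> y" if "y \<in> ?A" for y using that low by blast
    show "r + i \<in> ?A" using E cardE by (metis (mono_tags, lifting) mem_Collect_eq)
  qed
  then show "ghw (dual_code n C) i = r + i" by (simp add: ghw_def)
qed



end
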